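(* Fix an agent $i$ with $\theta_i^*\in\Theta_i$, let $\sigma^2>0$, and suppose the incentives $p_i(1),p_i(2),\dots$ are i.i.d. with $p_i(t)\sim\mathcal N(0,\sigma^2)$, and $x_i(t)=x_i^*(p_i(t))$. Let $\Sigma_i(0)\succ0$ and $\Sigma_i(t)^{-1}=\Sigma_i(t-1)^{-1}+\delta_i(t)\xi_i(t)\xi_i(t)^\top$. Then $\lambda_i(t):=\lambda_{\min}(\Sigma_i(t)^{-1})=\Theta(t)$ almost surely, i.e., there are (random) constants $0<c_1\le c_2$ with $c_1t\le\lambda_i(t)\le c_2t$ for all sufficiently large $t$, a.s.
   Context: $\mathcal X_i\subset\mathbb R$ is a compact interval with nonempty interior; $\Phi(x)=(x,x^2,\dots,x^d)^\top$; $\Theta_i=\{\theta\in\mathbb R^d: m_i\le\theta^\top\nabla^2\Phi(x)\le M_i\ \forall x\in\mathcal X_i\}$ for constants $0<m_i\le M_i$. The best response to incentive $p$ is $x_i^*(p)=\arg\min_{x\in\mathcal X_i}(\theta_i^{*\top}\Phi(x)+px)$. $\xi_i(t)=\nabla\Phi(x_i(t))$ and $\delta_i(t)=\mathbf 1\{x_i(t)\in\operatorname{int}\mathcal X_i\}$. *)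

theory Defs
  imports "HOL-Probability.Probability" "Jordan_Normal_Form.Char_Poly"
begin

text \<open>Vectors in R^d are JNF vectors of dimension d; component k of the paper
  (k = 1..d) is stored at index k-1.\<close>

definition Phi :: "nat \<Rightarrow> real \<Rightarrow> real vec" where
  "Phi d x = vec d (\<lambda>i. x ^ Suc i)"

definition gradPhi :: "nat \<Rightarrow> real \<Rightarrow> real vec" where
  "gradPhi d x = vec d (\<lambda>i. real (Suc i) * x ^ i)"

definition hessPhi :: "nat \<Rightarrow> real \<Rightarrow> real vec" where
  "hessPhi d x = vec d (\<lambda>i. real (Suc i * i) * x ^ (i - 1))"

definition Theta_set :: "nat \<Rightarrow> real set \<Rightarrow> real \<Rightarrow> real \<Rightarrow> real vec set" where
  "Theta_set d X m M = {\<theta> \<in> carrier_vec d. \<forall>x\<in>X. m \<le> \<theta> \<bullet> hessPhi d x \<and> \<theta> \<bullet> hessPhi d x \<le> M}"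

definition best_response :: "real vec \<Rightarrow> real set \<Rightarrow> real \<Rightarrow> real" where
  "best_response \<theta> X p = arg_min_on (\<lambda>x. \<theta> \<bullet> Phi (dim_vec \<theta>) x + p * x) X"

definition outer :: "real vec \<Rightarrow> real mat" where
  "outer v = mat (dim_vec v) (dim_vec v) (\<lambda>(i,j). v $ i * v $ j)"

definition pos_def :: "real mat \<Rightarrow> bool" where
  "pos_def A \<longleftrightarrow> A \<in> carrier_mat (dim_row A) (dim_row A) \<and> A\<^sup>T = A \<and>
     (\<forall>v \<in> carrier_vec (dim_row A). v \<noteq> 0\<^sub>v (dim_row A) \<longrightarrow> v \<bullet> (A *\<^sub>v v) > 0)"

definition lambda_min :: "real mat \<Rightarrow> real" where
  "lambda_min A = Min {k. eigenvalue A k}"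

end

theory Submission
  imports Defs
begin

no_notation inner (infix "\<bullet>" 70)
no_notation vec_nth (infixl "$" 90)

lemma cnj_mult_self: "cnj z * z = (complex_of_real (cmod z))\<^sup>2"
  by (metis complex_norm_square mult.commute of_real_power)

lemma sym_real_eigenvalue_exists:
  fixes A :: "real mat"
  assumes A: "A \<in> carrier_mat n n" and sym: "A\<^sup>T = A" and n: "n > 0"
  shows "\<exists>k. eigenvalue A k"
proof -
  define Ac :: "complex mat" where "Ac = of_real_hom.mat_hom A"
  have Ac: "Ac \<in> carrier_mat n n" using A by (simp add: Ac_def)
  have deg: "degree (char_poly Ac) = n" using degree_monic_char_poly[OF Ac] by simp
  then have "\<not> constant (poly (char_poly Ac))" using n by (simp add: constant_degree)
  then obtain l where l: "poly (char_poly Ac) l = 0" using fundamental_theorem_of_algebra by blast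
  then have "eigenvalue Ac l" using eigenvalue_root_char_poly[OF Ac] by simp
  then obtain w where w: "eigenvector Ac w l" unfolding eigenvalue_def by blast
  then have wc: "w \<in> carrier_vec n" and wnz: "w \<noteq> 0\<^sub>v n" and ev: "Ac *\<^sub>v w = l \<cdot>\<^sub>v w"
    using Ac unfolding eigenvector_def by auto
  have Aij: "A $$ (i,j) = A $$ (j,i)" if "i < n" "j < n" for i j
    using sym that A by (metis carrier_matD index_transpose_mat(1))
  have comp: "(\<Sum>j<n. of_real (A $$ (i,j)) * w $ j) = l * w $ i" if "i < n" for i
  proof -
    have "(Ac *\<^sub>v w) $ i = l * w $ i" using ev that wc by simp
    moreover have "(Ac *\<^sub>v w) $ i = (\<Sum>j<n. of_real (A $$ (i,j)) * w $ j)"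
      using that A wc by (simp add: Ac_def scalar_prod_def row_def lessThan_atLeast0)
    ultimately show ?thesis by simp
  qed
  define S where "S = (\<Sum>i<n. cnj (w $ i) * (\<Sum>j<n. of_real (A $$ (i,j)) * w $ j))"
  define N where "N = (\<Sum>i<n. cnj (w $ i) * w $ i)"
  have "S = (\<Sum>i<n. cnj (w $ i) * (l * w $ i))" unfolding S_def
    by (rule sum.cong) (simp_all add: comp)
  then have SN: "S = l * N" unfolding N_def
    by (simp add: sum_distrib_left mult_ac)
  have "cnj S = (\<Sum>i<n. (\<Sum>j<n. w $ i * of_real (A $$ (i,j)) * cnj (w $ j)))"
    unfolding S_def by (simp add: sum_distrib_left mult_ac)
  also have "\<dots> = (\<Sum>j<n. (\<Sum>i<n. w $ i * of_real (A $$ (i,j)) * cnj (w $ j)))"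
    by (rule sum.swap)
  also have "\<dots> = S" unfolding S_def
    by (auto simp: sum_distrib_left mult_ac Aij intro!: sum.cong)
  finally have cS: "cnj S = S" .
  have Nreal: "N = of_real (\<Sum>i<n. (cmod (w $ i))\<^sup>2)"
    unfolding N_def of_real_sum by (intro sum.cong refl) (simp add: cnj_mult_self)
  obtain i where i: "i < n" "w $ i \<noteq> 0" using wnz wc by (metis vec_eq_iff carrier_vecD index_zero_vec(1) index_zero_vec(2))
  have "(\<Sum>i<n. (cmod (w $ i))\<^sup>2) > 0"
    by (rule sum_pos2[of _ i]) (use i in auto)
  then have Nnz: "N \<noteq> 0" using Nreal by (metis of_real_eq_0_iff less_irrefl)
  have "cnj N = N" using Nreal by (metis complex_cnj_complex_of_real)
  then have "cnj l * N = l * N" using cS SN by (metis complex_cnj_mult)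
  then have "cnj l = l" using Nnz by simp
  then have lr: "l = of_real (Re l)" by (metis Reals_cnj_iff complex_is_Real_iff of_real_Re)
  have "poly (char_poly Ac) l = of_real (poly (char_poly A) (Re l))"
    unfolding Ac_def of_real_hom.char_poly_hom[OF A] by (subst lr) simp
  then have "poly (char_poly A) (Re l) = 0" using l by simp
  then show ?thesis using eigenvalue_root_char_poly[OF A] by blast
qed


lemma sp_self: "(v::real vec) \<in> carrier_vec n \<Longrightarrow> v \<bullet> v = (\<Sum>i<n. (v $ i)\<^sup>2)"
  by (simp add: scalar_prod_def power2_eq_square lessThan_atLeast0)

lemma sp_self_nonneg: "(v::real vec) \<in> carrier_vec n \<Longrightarrow> v \<bullet> v \<ge> 0"
  by (simp add: sp_self sum_nonneg)

lemma sp_self_pos: assumes "(v::real vec) \<in> carrier_vec n" "v \<noteq> 0\<^sub>v n" shows "v \<bullet> v > 0"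
proof -
  obtain i where i: "i < n" "v $ i \<noteq> 0" using assms by (metis vec_eq_iff carrier_vecD index_zero_vec(1) index_zero_vec(2))
  have "(\<Sum>i<n. (v $ i)\<^sup>2) > 0" by (rule sum_pos2[of _ i]) (use i in auto)
  then show ?thesis using sp_self[OF assms(1)] by simp
qed

lemma CS_vec: assumes "(v::real vec) \<in> carrier_vec n" "w \<in> carrier_vec n"
  shows "(v \<bullet> w)\<^sup>2 \<le> (v \<bullet> v) * (w \<bullet> w)"
proof -
  have "v \<bullet> w = (\<Sum>i<n. v $ i * w $ i)" using assms by (simp add: scalar_prod_def lessThan_atLeast0)
  then show ?thesis using Cauchy_Schwarz_ineq_sum[of "\<lambda>i. v $ i" "\<lambda>i. w $ i" "{..<n}"] sp_self[OF assms(1)] sp_self[OF assms(2)]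
    by (simp add: scalar_prod_def)
qed

lemma mat_vec_sq_bound: assumes B: "(B::real mat) \<in> carrier_mat n n" and v: "v \<in> carrier_vec n"
  shows "(B *\<^sub>v v) \<bullet> (B *\<^sub>v v) \<le> (\<Sum>i<n. \<Sum>k<n. (B $$ (i,k))\<^sup>2) * (v \<bullet> v)"
proof -
  have "(B *\<^sub>v v) \<bullet> (B *\<^sub>v v) = (\<Sum>i<n. ((B *\<^sub>v v) $ i)\<^sup>2)" using B v by (intro sp_self) auto
  also have "\<dots> \<le> (\<Sum>i<n. (\<Sum>k<n. (B $$ (i,k))\<^sup>2) * (v \<bullet> v))"
  proof (rule sum_mono)
    fix i assume i: "i \<in> {..<n}"
    have "(B *\<^sub>v v) $ i = (\<Sum>k<n. B $$ (i,k) * v $ k)"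
      using B v i by (simp add: scalar_prod_def row_def lessThan_atLeast0)
    then show "((B *\<^sub>v v) $ i)\<^sup>2 \<le> (\<Sum>k<n. (B $$ (i,k))\<^sup>2) * (v \<bullet> v)"
      using Cauchy_Schwarz_ineq_sum[of "\<lambda>k. B $$ (i,k)" "\<lambda>k. v $ k" "{..<n}"] sp_self[OF v] by simp
  qed
  also have "\<dots> = (\<Sum>i<n. \<Sum>k<n. (B $$ (i,k))\<^sup>2) * (v \<bullet> v)" by (simp add: sum_distrib_right)
  finally show ?thesis .
qed

lemma eig_finite: assumes A: "(A::real mat) \<in> carrier_mat n n"
  shows "finite {k. eigenvalue A k}"
proof -
  have "char_poly A \<noteq> 0" using degree_monic_char_poly[OF A] by auto
  then have "finite {k. poly (char_poly A) k = 0}" by (rule poly_roots_finite)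
  then show ?thesis using eigenvalue_root_char_poly[OF A] by simp
qed

lemma eig_quad: assumes A: "(A::real mat) \<in> carrier_mat n n" and "eigenvector A v k"
  shows "v \<in> carrier_vec n" "v \<noteq> 0\<^sub>v n" "v \<bullet> (A *\<^sub>v v) = k * (v \<bullet> v)"
  using assms unfolding eigenvector_def by auto

lemma lambda_min_ge:
  assumes A: "(A::real mat) \<in> carrier_mat n n" and sym: "A\<^sup>T = A" and n: "n > 0"
    and Q: "\<And>v. v \<in> carrier_vec n \<Longrightarrow> c * (v \<bullet> v) \<le> v \<bullet> (A *\<^sub>v v)"
  shows "c \<le> lambda_min A"
  unfolding lambda_min_def
proof (subst Min_ge_iff)
  show "finite {k. eigenvalue A k}" by (rule eig_finite[OF A])
  show "{k. eigenvalue A k} \<noteq> {}" using sym_real_eigenvalue_exists[OF A sym n] by auto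
  show "\<forall>a\<in>{k. eigenvalue A k}. c \<le> a"
  proof
    fix k assume "k \<in> {k. eigenvalue A k}"
    then obtain v where "eigenvector A v k" unfolding eigenvalue_def by auto
    note e = eig_quad[OF A this]
    have "c * (v \<bullet> v) \<le> k * (v \<bullet> v)" using Q[OF e(1)] e(3) by simp
    then show "c \<le> k" using sp_self_pos[OF e(1) e(2)] by simp
  qed
qed

lemma lambda_min_le:
  assumes A: "(A::real mat) \<in> carrier_mat n n" and sym: "A\<^sup>T = A" and n: "n > 0"
    and Q: "\<And>v. v \<in> carrier_vec n \<Longrightarrow> v \<bullet> (A *\<^sub>v v) \<le> C * (v \<bullet> v)"
  shows "lambda_min A \<le> C"
proof -
  obtain k where k: "eigenvalue A k" using sym_real_eigenvalue_exists[OF A sym n] by auto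
  then obtain v where "eigenvector A v k" unfolding eigenvalue_def by auto
  note e = eig_quad[OF A this]
  have "k * (v \<bullet> v) \<le> C * (v \<bullet> v)" using Q[OF e(1)] e(3) by simp
  then have "k \<le> C" using sp_self_pos[OF e(1) e(2)] by simp
  moreover have "lambda_min A \<le> k" unfolding lambda_min_def using eig_finite[OF A] k by (intro Min_le) auto
  ultimately show ?thesis by simp
qed

lemma sp_Phi: "(\<theta>::real vec) \<in> carrier_vec d \<Longrightarrow> \<theta> \<bullet> Phi d y = (\<Sum>i<d. \<theta> $ i * y ^ Suc i)"
  by (simp add: scalar_prod_def Phi_def lessThan_atLeast0)
lemma sp_gradPhi: "(\<theta>::real vec) \<in> carrier_vec d \<Longrightarrow> \<theta> \<bullet> gradPhi d y = (\<Sum>i<d. \<theta> $ i * (real (Suc i) * y ^ i))"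
  by (simp add: scalar_prod_def gradPhi_def lessThan_atLeast0)
lemma sp_hessPhi: "(\<theta>::real vec) \<in> carrier_vec d \<Longrightarrow> \<theta> \<bullet> hessPhi d y = (\<Sum>i<d. \<theta> $ i * (real (Suc i * i) * y ^ (i - 1)))"
  by (simp add: scalar_prod_def hessPhi_def lessThan_atLeast0)

lemma deriv_Phi: assumes "(\<theta>::real vec) \<in> carrier_vec d"
  shows "((\<lambda>y. \<theta> \<bullet> Phi d y) has_real_derivative \<theta> \<bullet> gradPhi d y) (at y)"
proof -
  have "((\<lambda>y. (\<Sum>i<d. \<theta> $ i * y ^ Suc i)) has_real_derivative (\<Sum>i<d. \<theta> $ i * (real (Suc i) * y ^ i))) (at y)"
    by (rule DERIV_sum, rule DERIV_cmult) (use DERIV_pow[of "Suc _" y] in simp)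
  then show ?thesis using assms by (simp add: sp_Phi sp_gradPhi)
qed

lemma deriv_gradPhi: assumes "(\<theta>::real vec) \<in> carrier_vec d"
  shows "((\<lambda>y. \<theta> \<bullet> gradPhi d y) has_real_derivative \<theta> \<bullet> hessPhi d y) (at y)"
proof -
  have "((\<lambda>y. (\<Sum>i<d. \<theta> $ i * (real (Suc i) * y ^ i))) has_real_derivative (\<Sum>i<d. \<theta> $ i * (real (Suc i * i) * y ^ (i - 1)))) (at y)"
  proof (rule DERIV_sum, rule DERIV_cmult)
    fix i
    have eq: "real (Suc i * i) * y ^ (i - 1) = real (Suc i) * (real i * y ^ (i - Suc 0))"
      by (simp add: algebra_simps)
    show "((\<lambda>y. real (Suc i) * y ^ i) has_real_derivative real (Suc i * i) * y ^ (i - 1)) (at y)"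
      unfolding eq by (rule DERIV_cmult) (rule DERIV_pow)
  qed
  then show ?thesis using assms by (simp add: sp_gradPhi sp_hessPhi)
qed

lemma grad_mono:
  assumes th: "\<theta> \<in> Theta_set d {a..b} m M" and "a \<le> y" "y < z" "z \<le> b"
  shows "\<theta> \<bullet> gradPhi d z - \<theta> \<bullet> gradPhi d y \<ge> m * (z - y)"
proof -
  have tc: "\<theta> \<in> carrier_vec d" and H: "\<And>x. x \<in> {a..b} \<Longrightarrow> m \<le> \<theta> \<bullet> hessPhi d x"
    using th unfolding Theta_set_def by auto
  obtain c where c: "y < c" "c < z" "\<theta> \<bullet> gradPhi d z - \<theta> \<bullet> gradPhi d y = (z - y) * (\<theta> \<bullet> hessPhi d c)"
    using MVT2[OF \<open>y < z\<close>, of "\<lambda>y. \<theta> \<bullet> gradPhi d y" "\<lambda>y. \<theta> \<bullet> hessPhi d y"] deriv_gradPhi[OF tc] by blast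
  have "m \<le> \<theta> \<bullet> hessPhi d c" using H c assms by auto
  then show ?thesis using c \<open>y < z\<close> by (simp add: mult.commute mult_left_mono)
qed

lemma best_response_eq:
  assumes th: "\<theta> \<in> Theta_set d {a..b} m M" and m: "m > 0"
    and y: "y \<in> {a..b}" and fy: "\<theta> \<bullet> gradPhi d y + p = 0"
  shows "best_response \<theta> {a..b} p = y"
proof -
  have tc: "\<theta> \<in> carrier_vec d" using th unfolding Theta_set_def by auto
  then have dim: "dim_vec \<theta> = d" by simp
  define G where "G z = \<theta> \<bullet> Phi d z + p * z" for z
  have DG: "(G has_real_derivative \<theta> \<bullet> gradPhi d z + p) (at z)" for z
  proof -
    have "((\<lambda>z. p * z) has_real_derivative p * 1) (at z)" by (rule DERIV_cmult[OF DERIV_ident])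
    then show ?thesis unfolding G_def using DERIV_add[OF deriv_Phi[OF tc]] by simp
  qed
  have less: "G y < G z" if z: "z \<in> {a..b}" "z \<noteq> y" for z
  proof (cases "y < z")
    case True
    obtain c where c: "y < c" "c < z" "G z - G y = (z - y) * (\<theta> \<bullet> gradPhi d c + p)"
      using MVT2[OF True, of G "\<lambda>z. \<theta> \<bullet> gradPhi d z + p"] DG by blast
    have "\<theta> \<bullet> gradPhi d c - \<theta> \<bullet> gradPhi d y \<ge> m * (c - y)"
      using grad_mono[OF th, of y c] c y z by auto
    moreover have "m * (c - y) > 0" using m c by simp
    ultimately have "\<theta> \<bullet> gradPhi d c + p > 0" using fy by linarith
    then have "(z - y) * (\<theta> \<bullet> gradPhi d c + p) > 0" using True by (simp add: mult_pos_pos)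
    then show ?thesis using c by simp
  next
    case False
    then have zy: "z < y" using that by auto
    obtain c where c: "z < c" "c < y" "G y - G z = (y - z) * (\<theta> \<bullet> gradPhi d c + p)"
      using MVT2[OF zy, of G "\<lambda>z. \<theta> \<bullet> gradPhi d z + p"] DG by blast
    have "\<theta> \<bullet> gradPhi d y - \<theta> \<bullet> gradPhi d c \<ge> m * (y - c)"
      using grad_mono[OF th, of c y] c y z by auto
    moreover have "m * (y - c) > 0" using m c by simp
    ultimately have "\<theta> \<bullet> gradPhi d c + p < 0" using fy by linarith
    then have "(y - z) * (\<theta> \<bullet> gradPhi d c + p) < 0" using zy by (simp add: mult_pos_neg)
    then show ?thesis using c by simp
  qed
  have "arg_min_on G {a..b} = y"
    unfolding arg_min_on_def arg_min_def
  proof (rule some_equality)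
    show "is_arg_min G (\<lambda>x. x \<in> {a..b}) y" unfolding is_arg_min_def
      using y less by (metis order.asym)
    fix x assume "is_arg_min G (\<lambda>x. x \<in> {a..b}) x"
    then have "x \<in> {a..b}" "\<not> G y < G x" using y unfolding is_arg_min_def by blast+
    then show "x = y" using less by blast
  qed
  then show ?thesis unfolding best_response_def dim G_def .
qed

lemma gradPhi_carrier[simp]: "gradPhi d y \<in> carrier_vec d"
  by (simp add: gradPhi_def)

lemma sp_gradPhi': "(v::real vec) \<in> carrier_vec d \<Longrightarrow> v \<bullet> gradPhi d y = (\<Sum>i<d. v $ i * (real (Suc i) * y ^ i))"
  by (rule sp_gradPhi)

lemma vander_inj:
  assumes z: "inj_on z {..<d}" and v: "(v::real vec) \<in> carrier_vec d"
    and zero: "\<And>k. k < d \<Longrightarrow> v \<bullet> gradPhi d (z k) = 0"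
  shows "v = 0\<^sub>v d"
proof -
  define P where "P = (\<Sum>i<d. monom (v $ i * real (Suc i)) i)"
  have polyP: "poly P y = v \<bullet> gradPhi d y" for y
    unfolding P_def poly_sum poly_monom sp_gradPhi'[OF v] by (simp add: mult_ac)
  have coeffP: "coeff P n = (if n < d then v $ n * real (Suc n) else 0)" for n
    unfolding P_def coeff_sum coeff_monom by (cases "n < d") auto
  have "P = 0"
  proof (rule ccontr)
    assume nz: "P \<noteq> 0"
    have dp: "degree P \<le> d - 1" by (rule degree_le) (auto simp: coeffP)
    have "z ` {..<d} \<subseteq> {x. poly P x = 0}" using zero polyP by auto
    then have "card (z ` {..<d}) \<le> card {x. poly P x = 0}"
      by (intro card_mono poly_roots_finite nz)
    also have "\<dots> \<le> degree P" by (rule card_poly_roots_bound[OF nz])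
    finally have "d \<le> degree P" using card_image[OF z] by simp
    moreover have "d > 0"
    proof (rule ccontr)
      assume "\<not> d > 0" then have "d = 0" by simp
      then have "P = 0" unfolding P_def by simp
      then show False using nz by simp
    qed
    ultimately show False using dp by simp
  qed
  show ?thesis
  proof (rule eq_vecI)
    fix i assume "i < dim_vec (0\<^sub>v d)"
    then have i: "i < d" by simp
    have "coeff P i = 0" using \<open>P = 0\<close> by simp
    then show "v $ i = 0\<^sub>v d $ i" using i coeffP[of i] by simp
  qed (use v in simp)
qed

lemma vander_bound:
  assumes z: "inj_on z {..<d}"
  shows "\<exists>\<mu>>0. \<forall>v\<in>carrier_vec d. \<mu> * (v \<bullet> v) \<le> (\<Sum>k<d. (v \<bullet> gradPhi d (z k))\<^sup>2)"
proof -
  define V :: "real mat" where "V = mat d d (\<lambda>(k,i). gradPhi d (z k) $ i)"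
  have V: "V \<in> carrier_mat d d" by (simp add: V_def)
  have Vv: "(V *\<^sub>v v) $ k = v \<bullet> gradPhi d (z k)" if "k < d" "v \<in> carrier_vec d" for k v
  proof -
    have "row V k = gradPhi d (z k)" using that by (intro eq_vecI) (auto simp: V_def gradPhi_def)
    then show ?thesis using that V comm_scalar_prod[of v d "gradPhi d (z k)"] by simp
  qed
  have "det V \<noteq> 0"
  proof
    assume "det V = 0"
    then obtain v where v: "v \<in> carrier_vec d" "v \<noteq> 0\<^sub>v d" "V *\<^sub>v v = 0\<^sub>v d"
      using det_0_iff_vec_prod_zero[OF V] by blast
    have "v \<bullet> gradPhi d (z k) = 0" if "k < d" for k
      using Vv[OF that v(1)] v(3) that by simp
    then have "v = 0\<^sub>v d" using vander_inj[OF z v(1)] by blast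
    then show False using v(2) by simp
  qed
  from det_non_zero_imp_unit[OF V this, of undefined]
  obtain B where B: "B \<in> carrier_mat d d" "B * V = 1\<^sub>m d"
    unfolding Units_def ring_mat_def by auto
  define K where "K = (\<Sum>i<d. \<Sum>k<d. (B $$ (i,k))\<^sup>2)"
  have K0: "K \<ge> 0" unfolding K_def by (intro sum_nonneg) auto
  have main: "(v \<bullet> v) \<le> K * (\<Sum>k<d. (v \<bullet> gradPhi d (z k))\<^sup>2)" if v: "v \<in> carrier_vec d" for v
  proof -
    have Vvc: "V *\<^sub>v v \<in> carrier_vec d" using V v by simp
    have "v = (B * V) *\<^sub>v v" using B v by simp
    also have "\<dots> = B *\<^sub>v (V *\<^sub>v v)" by (rule assoc_mult_mat_vec[OF B(1) V v])
    finally have vv: "v \<bullet> v = (B *\<^sub>v (V *\<^sub>v v)) \<bullet> (B *\<^sub>v (V *\<^sub>v v))" by simp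
    have "(V *\<^sub>v v) \<bullet> (V *\<^sub>v v) = (\<Sum>k<d. (v \<bullet> gradPhi d (z k))\<^sup>2)"
      using sp_self[OF Vvc] Vv[OF _ v] by simp
    then show ?thesis using vv mat_vec_sq_bound[OF B(1) Vvc] unfolding K_def by simp
  qed
  show ?thesis
  proof (intro exI[of _ "1 / (K + 1)"] conjI ballI)
    show "0 < 1 / (K + 1)" using K0 by simp
    fix v :: "real vec" assume v: "v \<in> carrier_vec d"
    have S0: "(\<Sum>k<d. (v \<bullet> gradPhi d (z k))\<^sup>2) \<ge> 0" by (intro sum_nonneg) auto
    have "v \<bullet> v \<le> (K + 1) * (\<Sum>k<d. (v \<bullet> gradPhi d (z k))\<^sup>2)"
      using main[OF v] S0 by (smt (verit) mult_right_mono)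
    then show "1 / (K + 1) * (v \<bullet> v) \<le> (\<Sum>k<d. (v \<bullet> gradPhi d (z k))\<^sup>2)"
      using K0 by (simp add: field_simps)
  qed
qed

lemma outer_carrier[simp]: "outer (v::real vec) \<in> carrier_mat (dim_vec v) (dim_vec v)"
  by (simp add: outer_def)

lemma outer_sym: "(outer (v::real vec))\<^sup>T = outer v"
  by (rule eq_matI) (auto simp: outer_def mult.commute)

lemma outer_quad: assumes "(v::real vec) \<in> carrier_vec n" "w \<in> carrier_vec n"
  shows "v \<bullet> (outer w *\<^sub>v v) = (v \<bullet> w)\<^sup>2"
proof -
  have "outer w *\<^sub>v v = (w \<bullet> v) \<cdot>\<^sub>v w"
  proof (rule eq_vecI)
    fix i assume "i < dim_vec ((w \<bullet> v) \<cdot>\<^sub>v w)"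
    then have i: "i < n" using assms by simp
    have "row (outer w) i = w $ i \<cdot>\<^sub>v w" using i assms by (intro eq_vecI) (auto simp: outer_def)
    then show "(outer w *\<^sub>v v) $ i = ((w \<bullet> v) \<cdot>\<^sub>v w) $ i"
      using i assms by (simp add: outer_def mult.commute)
  qed (use assms in \<open>simp add: outer_def\<close>)
  then show ?thesis using assms comm_scalar_prod[of v n w] by (simp add: power2_eq_square)
qed


lemma per_term:
  fixes A B :: real
  shows "(A + B)\<^sup>2 \<ge> A\<^sup>2 / 2 - B\<^sup>2"
proof -
  have "(A + B)\<^sup>2 - (A\<^sup>2 / 2 - B\<^sup>2) = (A + 2 * B)\<^sup>2 / 2" by (simp add: power2_eq_square algebra_simps)
  then show ?thesis by (smt (verit) zero_le_power2 divide_nonneg_pos)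
qed

lemma perturb:
  assumes v: "(v::real vec) \<in> carrier_vec d"
    and F: "(\<Sum>i<d. (real (Suc i) * y ^ i - real (Suc i) * z ^ i)\<^sup>2) \<le> e"
  shows "(v \<bullet> gradPhi d y)\<^sup>2 \<ge> (v \<bullet> gradPhi d z)\<^sup>2 / 2 - e * (v \<bullet> v)"
proof -
  define A where "A = (\<Sum>i<d. v $ i * (real (Suc i) * z ^ i))"
  define B where "B = (\<Sum>i<d. v $ i * (real (Suc i) * y ^ i - real (Suc i) * z ^ i))"
  have AB: "v \<bullet> gradPhi d y = A + B" unfolding A_def B_def sp_gradPhi'[OF v]
    by (simp add: sum.distrib[symmetric] algebra_simps)
  have Az: "v \<bullet> gradPhi d z = A" unfolding A_def sp_gradPhi'[OF v] ..
  have "B\<^sup>2 \<le> (\<Sum>i<d. (v $ i)\<^sup>2) * (\<Sum>i<d. (real (Suc i) * y ^ i - real (Suc i) * z ^ i)\<^sup>2)"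
    unfolding B_def by (rule Cauchy_Schwarz_ineq_sum)
  also have "\<dots> \<le> (v \<bullet> v) * e" unfolding sp_self[OF v]
    by (rule mult_left_mono[OF F]) (auto intro: sum_nonneg)
  finally have "B\<^sup>2 \<le> e * (v \<bullet> v)" by (simp add: mult.commute)
  then show ?thesis using per_term[of A B] AB Az by simp
qed

lemma regions:
  assumes th: "\<theta> \<in> Theta_set d {a..b} m M" and m: "m > 0" and ab: "a < b" and d: "d > 0"
  shows "\<exists>P \<beta> c. c > 0 \<and> (\<forall>k<d. \<exists>\<alpha> \<gamma>. \<alpha> < \<gamma> \<and> P k = {\<alpha>..\<gamma>}) \<and> (\<forall>k v. \<beta> k v \<ge> (0::real)) \<and>
     (\<forall>v\<in>carrier_vec d. c * (v \<bullet> v) \<le> (\<Sum>k<d. \<beta> k v)) \<and>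
     (\<forall>pp. \<forall>v\<in>carrier_vec d. (\<Sum>k<d. indicator (P k) pp * \<beta> k v) \<le>
        (if best_response \<theta> {a..b} pp \<in> {a<..<b} then (v \<bullet> gradPhi d (best_response \<theta> {a..b} pp))\<^sup>2 else 0))"
proof -
  have tc: "\<theta> \<in> carrier_vec d" using th unfolding Theta_set_def by auto
  define f where "f y = \<theta> \<bullet> gradPhi d y" for y
  have contf: "continuous_on S f" for S
    unfolding f_def by (intro continuous_at_imp_continuous_on ballI DERIV_isCont[OF deriv_gradPhi[OF tc]])
  have fmono: "f z - f y \<ge> m * (z - y)" if "a \<le> y" "y < z" "z \<le> b" for y z
    unfolding f_def by (rule grad_mono[OF th that])
  define h where "h = (b - a) / (real d + 1)"
  have h: "h > 0" using ab by (simp add: h_def)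
  define z where "z k = a + real (Suc k) * h" for k
  have zlo: "z k \<ge> a + h" for k unfolding z_def using h by simp
  have zhi: "z k \<le> b - h" if "k < d" for k
  proof -
    have "real (Suc k) \<le> real d" using that by simp
    then have X: "real (Suc k) * h \<le> real d * h" using h by (intro mult_right_mono) auto
    have d1: "real d + 1 \<noteq> 0" by linarith
    have E0: "(real d + 1) * h = b - a" unfolding h_def using d1 by simp
    have E: "real d * h + h = b - a" using E0 by (simp add: algebra_simps)
    show ?thesis using X E unfolding z_def by simp
  qed
  have zsep: "\<bar>z k - z j\<bar> \<ge> h" if "k \<noteq> j" for k j
  proof -
    have "z k - z j = (real k - real j) * h" unfolding z_def by (simp add: algebra_simps)
    then have "\<bar>z k - z j\<bar> = \<bar>real k - real j\<bar> * h" using h by (simp add: abs_mult)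
    moreover have "\<bar>real k - real j\<bar> \<ge> 1" using that by linarith
    ultimately show ?thesis using h by (simp add: mult_right_mono)
  qed
  have zinj: "inj_on z {..<d}" by (rule inj_onI) (use zsep h in force)
  obtain \<mu> where mu: "\<mu> > 0" "\<And>v. v\<in>carrier_vec d \<Longrightarrow> \<mu> * (v \<bullet> v) \<le> (\<Sum>k<d. (v \<bullet> gradPhi d (z k))\<^sup>2)"
    using vander_bound[OF zinj] by blast
  define e where "e = \<mu> / (4 * real d)"
  have e: "e > 0" using mu d by (simp add: e_def)
  define F where "F k y = (\<Sum>i<d. (real (Suc i) * y ^ i - real (Suc i) * z k ^ i)\<^sup>2)" for k y
  have "\<forall>k\<in>{..<d}. \<exists>\<delta>. \<delta> > 0 \<and> (\<forall>y. \<bar>y - z k\<bar> < \<delta> \<longrightarrow> F k y < e)"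
  proof
    fix k
    have "isCont (F k) (z k)" unfolding F_def by (intro continuous_intros)
    then have lim0: "F k \<midarrow>z k\<rightarrow> F k (z k)" by (simp add: isCont_def)
    have "F k (z k) = 0" unfolding F_def by simp
    with lim0 have lim: "F k \<midarrow>z k\<rightarrow> 0" by simp
    obtain s where s: "s > 0" "\<And>y. y \<noteq> z k \<and> norm (y - z k) < s \<longrightarrow> norm (F k y - 0) < e"
      using LIM_D[OF lim e] by auto
    have "F k y < e" if "\<bar>y - z k\<bar> < s" for y
    proof (cases "y = z k")
      case True then show ?thesis using \<open>F k (z k) = 0\<close> e by simp
    next
      case False
      then have "norm (F k y - 0) < e" using s(2)[of y] that by simp
      then show ?thesis by simp
    qed
    then show "\<exists>\<delta>. \<delta> > 0 \<and> (\<forall>y. \<bar>y - z k\<bar> < \<delta> \<longrightarrow> F k y < e)" using s(1) by blast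
  qed
  from bchoice[OF this] obtain \<delta> where \<delta>: "\<And>k. k < d \<Longrightarrow> \<delta> k > 0"
    "\<And>k y. k < d \<Longrightarrow> \<bar>y - z k\<bar> < \<delta> k \<Longrightarrow> F k y < e" by blast
  define \<eta> where "\<eta> = min (h / 4) (Min (\<delta> ` {..<d}) / 2)"
  have Minpos: "Min (\<delta> ` {..<d}) > 0" using d \<delta>(1) by (subst Min_gr_iff) auto
  have eta: "\<eta> > 0" "\<eta> \<le> h / 4" using h Minpos by (auto simp: \<eta>_def)
  have eta_d: "\<eta> < \<delta> k" if "k < d" for k
  proof -
    have "Min (\<delta> ` {..<d}) \<le> \<delta> k" using that by (intro Min_le) auto
    then show ?thesis using Minpos unfolding \<eta>_def by linarith
  qed
  define P where "P k = {- f (z k + \<eta>) .. - f (z k - \<eta>)}" for k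
  define \<beta> where "\<beta> k v = max 0 ((v \<bullet> gradPhi d (z k))\<^sup>2 / 2 - e * (v \<bullet> v))" for k v
  have Pint: "\<exists>\<alpha> \<gamma>. \<alpha> < \<gamma> \<and> P k = {\<alpha>..\<gamma>}" if "k < d" for k
  proof -
    have A: "f (z k + \<eta>) - f (z k - \<eta>) \<ge> m * ((z k + \<eta>) - (z k - \<eta>))"
      using zlo[of k] zhi[OF that] eta h by (intro fmono) auto
    have B: "m * ((z k + \<eta>) - (z k - \<eta>)) > 0" using m eta by simp
    have "f (z k - \<eta>) < f (z k + \<eta>)" using A B by linarith
    then show ?thesis unfolding P_def by (intro exI[of _ "- f (z k + \<eta>)"] exI[of _ "- f (z k - \<eta>)"]) auto
  qed
  have inP: "best_response \<theta> {a..b} pp \<in> {a<..<b} \<and> \<bar>best_response \<theta> {a..b} pp - z k\<bar> \<le> \<eta>"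
    if "k < d" "pp \<in> P k" for k pp
  proof -
    have lo: "z k - \<eta> > a" "z k + \<eta> < b" using zlo[of k] zhi[OF that(1)] eta h by auto
    have "f (z k - \<eta>) \<le> - pp" "- pp \<le> f (z k + \<eta>)" using that(2) unfolding P_def by auto
    then obtain y where y: "z k - \<eta> \<le> y" "y \<le> z k + \<eta>" "f y = - pp"
      using IVT'[of f "z k - \<eta>" "- pp" "z k + \<eta>"] contf eta by auto
    have "best_response \<theta> {a..b} pp = y"
      by (rule best_response_eq[OF th m]) (use y lo in \<open>auto simp: f_def\<close>)
    then show ?thesis using y lo by auto
  qed
  have c1: "\<mu> / 4 > 0" using mu by simp
  have c2: "\<forall>k<d. \<exists>\<alpha> \<gamma>. \<alpha> < \<gamma> \<and> P k = {\<alpha>..\<gamma>}" using Pint by blast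
  have c3: "\<forall>k v. \<beta> k v \<ge> 0" unfolding \<beta>_def by simp
  have c4: "\<forall>v\<in>carrier_vec d. \<mu> / 4 * (v \<bullet> v) \<le> (\<Sum>k<d. \<beta> k v)"
  proof
    fix v :: "real vec" assume v: "v \<in> carrier_vec d"
    have "(\<Sum>k<d. \<beta> k v) \<ge> (\<Sum>k<d. (v \<bullet> gradPhi d (z k))\<^sup>2 / 2 - e * (v \<bullet> v))"
      unfolding \<beta>_def by (intro sum_mono) simp
    also have "(\<Sum>k<d. (v \<bullet> gradPhi d (z k))\<^sup>2 / 2 - e * (v \<bullet> v)) =
        (\<Sum>k<d. (v \<bullet> gradPhi d (z k))\<^sup>2) / 2 - real d * e * (v \<bullet> v)"
      by (simp add: sum_subtractf sum_divide_distrib)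
    also have "real d * e = \<mu> / 4" using d by (simp add: e_def)
    finally show "\<mu> / 4 * (v \<bullet> v) \<le> (\<Sum>k<d. \<beta> k v)" using mu(2)[OF v] by simp
  qed
  have c5: "\<forall>pp. \<forall>v\<in>carrier_vec d. (\<Sum>k<d. indicator (P k) pp * \<beta> k v) \<le>
        (if best_response \<theta> {a..b} pp \<in> {a<..<b} then (v \<bullet> gradPhi d (best_response \<theta> {a..b} pp))\<^sup>2 else 0)"
  proof (intro allI ballI)
    fix pp :: real and v :: "real vec" assume v: "v \<in> carrier_vec d"
    let ?y = "best_response \<theta> {a..b} pp"
    let ?R = "if ?y \<in> {a<..<b} then (v \<bullet> gradPhi d ?y)\<^sup>2 else 0"
    show "(\<Sum>k<d. indicator (P k) pp * \<beta> k v) \<le> ?R"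
    proof (cases "\<exists>k<d. pp \<in> P k")
      case False
      then have "(\<Sum>k<d. indicator (P k) pp * \<beta> k v) = 0" by (intro sum.neutral) auto
      then show ?thesis by simp
    next
      case True
      then obtain k0 where k0: "k0 < d" "pp \<in> P k0" by blast
      note y0 = inP[OF k0]
      have other: "pp \<notin> P k" if "k < d" "k \<noteq> k0" for k
      proof
        assume "pp \<in> P k"
        note y1 = inP[OF that(1) this]
        have "\<bar>z k - z k0\<bar> \<le> 2 * \<eta>" using y0 y1 by linarith
        then show False using zsep[OF that(2)] eta h by linarith
      qed
      have "(\<Sum>k<d. indicator (P k) pp * \<beta> k v) = indicator (P k0) pp * \<beta> k0 v
          + (\<Sum>k\<in>{..<d} - {k0}. indicator (P k) pp * \<beta> k v)"
        using k0 by (subst sum.remove[of _ k0]) auto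
      also have "(\<Sum>k\<in>{..<d} - {k0}. indicator (P k) pp * \<beta> k v) = 0"
        using other by (intro sum.neutral) auto
      finally have L: "(\<Sum>k<d. indicator (P k) pp * \<beta> k v) = \<beta> k0 v" using k0 by simp
      have "F k0 ?y < e" using \<delta>(2)[OF k0(1)] eta_d[OF k0(1)] y0 by simp
      then have "(v \<bullet> gradPhi d ?y)\<^sup>2 \<ge> (v \<bullet> gradPhi d (z k0))\<^sup>2 / 2 - e * (v \<bullet> v)"
        by (intro perturb[OF v]) (simp add: F_def)
      then have "\<beta> k0 v \<le> (v \<bullet> gradPhi d ?y)\<^sup>2" unfolding \<beta>_def by simp
      then show ?thesis using L y0 by simp
    qed
  qed
  show ?thesis using c1 c2 c3 c4 c5 by blast
qed

lemma (in prob_space) freq_lower: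
  assumes ind: "indep_vars (\<lambda>_. borel) p {1..}"
    and Pm: "P \<in> sets borel"
    and q: "\<And>s. s \<ge> 1 \<Longrightarrow> measure M (p s -` P \<inter> space M) = q" and q0: "q > 0"
  shows "AE \<omega> in M. eventually (\<lambda>t. q * real t / 2 < (\<Sum>s\<in>{1..t}. indicator P (p s \<omega>) :: real)) sequentially"
proof -
  define X :: "nat \<Rightarrow> 'a \<Rightarrow> real" where "X s \<omega> = indicator P (p s \<omega>)" for s \<omega>
  have rv: "p s \<in> borel_measurable M" if "s \<ge> 1" for s
    using ind that unfolding indep_vars_def by auto
  have Xm: "X s \<in> borel_measurable M" if "s \<ge> 1" for s
    unfolding X_def using rv[OF that] Pm by measurable
  have indX: "indep_vars (\<lambda>_. borel) X {1..}"
    unfolding X_def by (rule indep_vars_compose2[OF ind]) (use Pm in measurable)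
  have EX: "expectation (X s) = q" if "s \<ge> 1" for s
  proof -
    have "expectation (X s) = expectation (indicator (p s -` P \<inter> space M))"
      by (intro Bochner_Integration.integral_cong) (auto simp: X_def indicator_def)
    also have "\<dots> = measure M ((p s -` P \<inter> space M) \<inter> space M)" by simp
    also have "\<dots> = q" using q[OF that] by (simp add: Int_absorb2 inf_assoc)
    finally show ?thesis .
  qed
  define A where "A t = {\<omega> \<in> space M. (\<Sum>s\<in>{1..t}. X s \<omega>) \<le> q * real t / 2}" for t
  have Am: "A t \<in> sets M" for t
  proof -
    have "(\<lambda>\<omega>. \<Sum>s\<in>{1..t}. X s \<omega>) \<in> borel_measurable M"
      by (intro borel_measurable_sum) (use Xm in auto)
    then show ?thesis unfolding A_def by measurable
  qed
  have Abound: "measure M (A t) \<le> exp (- (q\<^sup>2 / 2)) ^ t" for t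
  proof (cases "t = 0")
    case True then show ?thesis by simp
  next
    case False
    then have t: "t \<ge> 1" by simp
    interpret H: Hoeffding_ineq M "{1..t}" X "\<lambda>_. 0" "\<lambda>_. 1" "\<Sum>s\<in>{1..t}. expectation (X s)"
    proof unfold_locales
      show "finite {1..t}" by simp
      show "indep_vars (\<lambda>_. borel) X {1..t}" by (rule indep_vars_subset[OF indX]) auto
      show "AE x in M. X i x \<in> {0..1}" if "i \<in> {1..t}" for i by (auto simp: X_def indicator_def)
    qed simp
    have mu: "(\<Sum>s\<in>{1..t}. expectation (X s)) = real t * q" using EX by simp
    have "measure M (A t) = prob {x \<in> space M. (\<Sum>i\<in>{1..t}. X i x) \<le> (\<Sum>s\<in>{1..t}. expectation (X s)) - q * real t / 2}"
      unfolding A_def mu by (rule arg_cong[where f="prob"]) (auto simp: algebra_simps)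
    also have "\<dots> \<le> exp (- 2 * (q * real t / 2)\<^sup>2 / (\<Sum>i\<in>{1..t}. (1 - 0)\<^sup>2))"
      by (rule H.Hoeffding_ineq_le) (use q0 t in auto)
    also have "- 2 * (q * real t / 2)\<^sup>2 / (\<Sum>i\<in>{1..t}. (1 - (0::real))\<^sup>2) = real t * (- (q\<^sup>2 / 2))"
      using t by (simp add: power2_eq_square field_simps)
    also have "exp (real t * (- (q\<^sup>2 / 2))) = exp (- (q\<^sup>2 / 2)) ^ t" by (rule exp_of_nat_mult)
    finally show ?thesis .
  qed
  have summ: "summable (\<lambda>t. measure M (A t))"
  proof (rule summable_comparison_test[OF _ summable_geometric])
    show "\<exists>N. \<forall>n\<ge>N. norm (measure M (A n)) \<le> exp (- (q\<^sup>2 / 2)) ^ n" using Abound by auto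
    show "norm (exp (- (q\<^sup>2 / 2))) < 1" using q0 by simp
  qed
  have "AE \<omega> in M. eventually (\<lambda>t. \<omega> \<in> space M - A t) sequentially"
    by (rule borel_cantelli_AE1[OF Am _ summ]) (simp add: emeasure_eq_measure)
  then show ?thesis
    by (rule AE_mp) (auto intro!: AE_I2 elim!: eventually_mono simp: A_def X_def not_le)
qed

lemma (in prob_space) normal_interval_pos:
  assumes D: "distributed M lborel X (\<lambda>y. ennreal (normal_density 0 \<sigma> y))" and s: "\<sigma> > 0"
    and ag: "\<alpha> < \<gamma>"
  shows "measure M (X -` {\<alpha>..\<gamma>} \<inter> space M) = enn2real (\<integral>\<^sup>+x. ennreal (normal_density 0 \<sigma> x) * indicator {\<alpha>..\<gamma>} x \<partial>lborel)"
    and "enn2real (\<integral>\<^sup>+x. ennreal (normal_density 0 \<sigma> x) * indicator {\<alpha>..\<gamma>} x \<partial>lborel) > 0"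
proof -
  have E: "emeasure M (X -` {\<alpha>..\<gamma>} \<inter> space M) = (\<integral>\<^sup>+x. ennreal (normal_density 0 \<sigma> x) * indicator {\<alpha>..\<gamma>} x \<partial>lborel)"
    by (rule distributed_emeasure[OF D]) simp
  then show 1: "measure M (X -` {\<alpha>..\<gamma>} \<inter> space M) = enn2real (\<integral>\<^sup>+x. ennreal (normal_density 0 \<sigma> x) * indicator {\<alpha>..\<gamma>} x \<partial>lborel)"
    unfolding measure_def by simp
  have "(\<integral>\<^sup>+x. ennreal (normal_density 0 \<sigma> x) * indicator {\<alpha>..\<gamma>} x \<partial>lborel) \<noteq> 0"
  proof
    assume "(\<integral>\<^sup>+x. ennreal (normal_density 0 \<sigma> x) * indicator {\<alpha>..\<gamma>} x \<partial>lborel) = 0"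
    then have "AE x in lborel. ennreal (normal_density 0 \<sigma> x) * indicator {\<alpha>..\<gamma>} x = 0"
      by (subst (asm) nn_integral_0_iff_AE) auto
    then have "AE x in lborel. x \<notin> {\<alpha>..\<gamma>}"
      by (rule AE_mp) (use normal_density_pos[OF s, of 0, THEN less_imp_neq, THEN not_sym] in \<open>auto intro!: AE_I2 simp: indicator_def\<close>)
    then have "{\<alpha>..\<gamma>} \<in> null_sets lborel" by (subst AE_iff_null_sets) auto
    then show False using ag emeasure_lborel_Icc[of \<alpha> \<gamma>] by (auto simp: null_sets_def)
  qed
  moreover have "(\<integral>\<^sup>+x. ennreal (normal_density 0 \<sigma> x) * indicator {\<alpha>..\<gamma>} x \<partial>lborel) \<noteq> \<top>"
    using E emeasure_eq_measure by (metis ennreal_neq_top)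
  ultimately show "enn2real (\<integral>\<^sup>+x. ennreal (normal_density 0 \<sigma> x) * indicator {\<alpha>..\<gamma>} x \<partial>lborel) > 0"
    by (simp add: enn2real_positive_iff less_top zero_less_iff_neq_zero)
qed

lemma lam0_facts:
  assumes S: "Sigma0 \<in> carrier_mat d d" and pd: "pos_def Sigma0"
    and L: "L \<in> carrier_mat d d" and LS: "L * Sigma0 = 1\<^sub>m d"
  shows "L\<^sup>T = L" "\<And>v. v \<in> carrier_vec d \<Longrightarrow> 0 \<le> v \<bullet> (L *\<^sub>v v)"
    "\<exists>C. \<forall>v\<in>carrier_vec d. v \<bullet> (L *\<^sub>v v) \<le> C * (v \<bullet> v)"
proof -
  have SL: "Sigma0 * L = 1\<^sub>m d" by (rule mat_mult_left_right_inverse[OF L S LS])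
  have St: "Sigma0\<^sup>T = Sigma0" and dS: "dim_row Sigma0 = d" using pd S unfolding pos_def_def by auto
  have Ltc: "L\<^sup>T \<in> carrier_mat d d" using L by simp
  have "(L * Sigma0)\<^sup>T = Sigma0\<^sup>T * L\<^sup>T" by (rule transpose_mult[OF L S])
  then have SLt: "Sigma0 * L\<^sup>T = 1\<^sub>m d" using LS St by simp
  have "L = L * (Sigma0 * L\<^sup>T)" using SLt L by (simp add: right_mult_one_mat)
  also have "\<dots> = (L * Sigma0) * L\<^sup>T" using L S Ltc by simp
  also have "\<dots> = L\<^sup>T" using LS Ltc by (simp add: left_mult_one_mat)
  finally show "L\<^sup>T = L" by simp
  show "0 \<le> v \<bullet> (L *\<^sub>v v)" if v: "v \<in> carrier_vec d" for v
  proof -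
    define u where "u = L *\<^sub>v v"
    have u: "u \<in> carrier_vec d" using L v by (simp add: u_def)
    have "Sigma0 *\<^sub>v u = (Sigma0 * L) *\<^sub>v v" unfolding u_def using S L v by simp
    also have "\<dots> = v" using SL v by simp
    finally have Su: "Sigma0 *\<^sub>v u = v" .
    have "v \<bullet> u = u \<bullet> (Sigma0 *\<^sub>v u)" using Su comm_scalar_prod[OF u v] by simp
    moreover have "u \<bullet> (Sigma0 *\<^sub>v u) \<ge> 0"
    proof (cases "u = 0\<^sub>v d")
      case True then show ?thesis using S by simp
    next
      case False then show ?thesis using pd u dS unfolding pos_def_def by (auto intro: less_imp_le)
    qed
    ultimately show ?thesis unfolding u_def by simp
  qed
  define K where "K = (\<Sum>i<d. \<Sum>k<d. (L $$ (i,k))\<^sup>2)"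
  have K0: "K \<ge> 0" unfolding K_def by (intro sum_nonneg) auto
  have "v \<bullet> (L *\<^sub>v v) \<le> (K + 1) * (v \<bullet> v)" if v: "v \<in> carrier_vec d" for v
  proof -
    define u where "u = L *\<^sub>v v"
    have u: "u \<in> carrier_vec d" using L v by (simp add: u_def)
    have vv: "v \<bullet> v \<ge> 0" by (rule sp_self_nonneg[OF v])
    have "(v \<bullet> u)\<^sup>2 \<le> (v \<bullet> v) * (u \<bullet> u)" by (rule CS_vec[OF v u])
    also have "\<dots> \<le> (v \<bullet> v) * (K * (v \<bullet> v))"
      using mat_vec_sq_bound[OF L v] vv unfolding u_def K_def by (intro mult_left_mono) auto
    also have "\<dots> \<le> ((K + 1) * (v \<bullet> v))\<^sup>2"
    proof -
      have "K \<le> (K + 1)\<^sup>2" using K0 by (simp add: power2_eq_square algebra_simps)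
      then have "K * ((v \<bullet> v) * (v \<bullet> v)) \<le> (K + 1)\<^sup>2 * ((v \<bullet> v) * (v \<bullet> v))"
        using vv by (intro mult_right_mono) auto
      then show ?thesis by (simp add: power2_eq_square mult_ac)
    qed
    finally have "\<bar>v \<bullet> u\<bar> \<le> \<bar>(K + 1) * (v \<bullet> v)\<bar>" by (simp add: abs_le_square_iff)
    then show ?thesis using K0 vv unfolding u_def by (smt (verit) mult_nonneg_nonneg)
  qed
  then show "\<exists>C. \<forall>v\<in>carrier_vec d. v \<bullet> (L *\<^sub>v v) \<le> C * (v \<bullet> v)" by blast
qed

lemma lam_facts:
  fixes Lam :: "nat \<Rightarrow> real mat" and x :: "nat \<Rightarrow> real"
  assumes L0: "Lam 0 \<in> carrier_mat d d" and L0s: "(Lam 0)\<^sup>T = Lam 0"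
    and rec: "\<And>t. Lam (Suc t) = Lam t +
           (if x (Suc t) \<in> interior {a..b} then outer (gradPhi d (x (Suc t))) else 0\<^sub>m d d)"
  shows "Lam t \<in> carrier_mat d d \<and> (Lam t)\<^sup>T = Lam t \<and>
    (\<forall>v\<in>carrier_vec d. v \<bullet> (Lam t *\<^sub>v v) = v \<bullet> (Lam 0 *\<^sub>v v) +
       (\<Sum>s\<in>{1..t}. if x s \<in> {a<..<b} then (v \<bullet> gradPhi d (x s))\<^sup>2 else 0))"
proof (induction t)
  case 0 then show ?case using L0 L0s by simp
next
  case (Suc t)
  define Om where "Om = (if x (Suc t) \<in> interior {a..b} then outer (gradPhi d (x (Suc t))) else 0\<^sub>m d d)"
  have Oc: "Om \<in> carrier_mat d d" unfolding Om_def using outer_carrier[of "gradPhi d (x (Suc t))"] by (simp add: gradPhi_def)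
  have Os: "Om\<^sup>T = Om" unfolding Om_def using outer_sym by auto
  have Lc: "Lam t \<in> carrier_mat d d" and Ls: "(Lam t)\<^sup>T = Lam t" using Suc.IH by auto
  have LS: "Lam (Suc t) = Lam t + Om" using rec unfolding Om_def by simp
  have c: "Lam (Suc t) \<in> carrier_mat d d" using LS Lc Oc by simp
  have s: "(Lam (Suc t))\<^sup>T = Lam (Suc t)" using LS Lc Oc Ls Os by (simp add: transpose_add)
  have q: "v \<bullet> (Lam (Suc t) *\<^sub>v v) = v \<bullet> (Lam 0 *\<^sub>v v) +
       (\<Sum>s\<in>{1..Suc t}. if x s \<in> {a<..<b} then (v \<bullet> gradPhi d (x s))\<^sup>2 else 0)" if v: "v \<in> carrier_vec d" for v
  proof -
    have "v \<bullet> (Lam (Suc t) *\<^sub>v v) = v \<bullet> (Lam t *\<^sub>v v + Om *\<^sub>v v)"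
      unfolding LS using add_mult_distrib_mat_vec[OF Lc Oc v] by simp
    also have "\<dots> = v \<bullet> (Lam t *\<^sub>v v) + v \<bullet> (Om *\<^sub>v v)"
      by (rule scalar_prod_add_distrib[of _ d]) (use v Lc Oc in auto)
    also have "v \<bullet> (Om *\<^sub>v v) = (if x (Suc t) \<in> {a<..<b} then (v \<bullet> gradPhi d (x (Suc t)))\<^sup>2 else 0)"
    proof -
      have z: "0\<^sub>m d d *\<^sub>v v = 0\<^sub>v d" using v by (intro eq_vecI) (auto simp: scalar_prod_def)
      show ?thesis unfolding Om_def using v z outer_quad[OF v gradPhi_carrier] by auto
    qed
    finally show ?thesis using Suc.IH v by simp
  qed
  show ?case using c s q by blast
qed

lemma grad_sq_bound:
  assumes v: "(v::real vec) \<in> carrier_vec d" and y: "y \<in> {a<..<b}"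
  shows "(v \<bullet> gradPhi d y)\<^sup>2 \<le> (\<Sum>i<d. (real (Suc i) * (\<bar>a\<bar> + \<bar>b\<bar>) ^ i)\<^sup>2) * (v \<bullet> v)"
proof -
  have g: "gradPhi d y \<in> carrier_vec d" by simp
  have A: "(v \<bullet> gradPhi d y)\<^sup>2 \<le> (v \<bullet> v) * (gradPhi d y \<bullet> gradPhi d y)" by (rule CS_vec[OF v g])
  have "gradPhi d y \<bullet> gradPhi d y = (\<Sum>i<d. (real (Suc i) * y ^ i)\<^sup>2)"
    using sp_self[OF g] by (simp add: gradPhi_def)
  also have "\<dots> \<le> (\<Sum>i<d. (real (Suc i) * (\<bar>a\<bar> + \<bar>b\<bar>) ^ i)\<^sup>2)"
  proof (rule sum_mono)
    fix i
    have ay: "\<bar>y\<bar> \<le> \<bar>a\<bar> + \<bar>b\<bar>" using y by auto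
    have "\<bar>real (Suc i) * y ^ i\<bar> \<le> \<bar>real (Suc i) * (\<bar>a\<bar> + \<bar>b\<bar>) ^ i\<bar>"
      using ay by (simp add: abs_mult power_abs power_mono)
    then show "(real (Suc i) * y ^ i)\<^sup>2 \<le> (real (Suc i) * (\<bar>a\<bar> + \<bar>b\<bar>) ^ i)\<^sup>2"
      by (simp only: abs_le_square_iff)
  qed
  finally have B: "gradPhi d y \<bullet> gradPhi d y \<le> (\<Sum>i<d. (real (Suc i) * (\<bar>a\<bar> + \<bar>b\<bar>) ^ i)\<^sup>2)" .
  have "(v \<bullet> v) * (gradPhi d y \<bullet> gradPhi d y) \<le> (v \<bullet> v) * (\<Sum>i<d. (real (Suc i) * (\<bar>a\<bar> + \<bar>b\<bar>) ^ i)\<^sup>2)"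
    by (rule mult_left_mono[OF B sp_self_nonneg[OF v]])
  then show ?thesis using A by (simp only: mult.commute[of "v \<bullet> v"])
qed

theorem theorem2:
  fixes M :: "'w measure"
    and d :: nat and a b m\<^sub>i M\<^sub>i \<sigma>2 :: real and \<theta> :: "real vec"
    and p :: "nat \<Rightarrow> 'w \<Rightarrow> real" and x :: "nat \<Rightarrow> 'w \<Rightarrow> real"
    and Sigma0 :: "real mat" and Lam :: "nat \<Rightarrow> 'w \<Rightarrow> real mat"
  assumes "prob_space M"
    and "d > 0" and "a < b" and "0 < m\<^sub>i" and "m\<^sub>i \<le> M\<^sub>i"
    and "\<theta> \<in> Theta_set d {a..b} m\<^sub>i M\<^sub>i"
    and "\<sigma>2 > 0"
    and "prob_space.indep_vars M (\<lambda>_. borel) p {1..}"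
    and "\<And>t. t \<ge> 1 \<Longrightarrow>
           distributed M lborel (p t) (\<lambda>y. ennreal (normal_density 0 (sqrt \<sigma>2) y))"
    and "\<And>t \<omega>. t \<ge> 1 \<Longrightarrow> x t \<omega> = best_response \<theta> {a..b} (p t \<omega>)"
    and "Sigma0 \<in> carrier_mat d d" and "pos_def Sigma0"
    and "\<And>\<omega>. Lam 0 \<omega> \<in> carrier_mat d d \<and> Lam 0 \<omega> * Sigma0 = 1\<^sub>m d"
    and "\<And>t \<omega>. Lam (Suc t) \<omega> = Lam t \<omega> +
           (if x (Suc t) \<omega> \<in> interior {a..b} then outer (gradPhi d (x (Suc t) \<omega>))
            else 0\<^sub>m d d)"
  shows "AE \<omega> in M. \<exists>c1 c2. 0 < c1 \<and> c1 \<le> c2 \<and>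
           (\<forall>\<^sub>F t in sequentially. c1 * real t \<le> lambda_min (Lam t \<omega>) \<and>
                                    lambda_min (Lam t \<omega>) \<le> c2 * real t)"
proof -
  interpret prob_space M by (rule assms(1))
  have dpos: "d > 0" by (rule assms(2))
  obtain P \<beta> c where c: "c > 0" and Pint: "\<forall>k<d. \<exists>\<alpha> \<gamma>. \<alpha> < \<gamma> \<and> P k = {\<alpha>..\<gamma>}"
    and \<beta>0: "\<forall>k v. \<beta> k v \<ge> (0::real)"
    and \<beta>c: "\<forall>v\<in>carrier_vec d. c * (v \<bullet> v) \<le> (\<Sum>k<d. \<beta> k v)"
    and \<beta>p: "\<forall>pp. \<forall>v\<in>carrier_vec d. (\<Sum>k<d. indicator (P k) pp * \<beta> k v) \<le>
        (if best_response \<theta> {a..b} pp \<in> {a<..<b} then (v \<bullet> gradPhi d (best_response \<theta> {a..b} pp))\<^sup>2 else 0)"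
    using regions[OF assms(6) assms(4) assms(3) assms(2)] by (elim exE conjE) (rule that)
  have sig: "sqrt \<sigma>2 > 0" using assms(7) by simp
  define q where "q k = measure M (p 1 -` P k \<inter> space M)" for k
  have qs: "measure M (p s -` P k \<inter> space M) = q k" if "k < d" "s \<ge> 1" for k s
  proof -
    have "\<exists>\<alpha> \<gamma>. \<alpha> < \<gamma> \<and> P k = {\<alpha>..\<gamma>}" using Pint that(1) by simp
    then obtain \<alpha> \<gamma> where ag: "\<alpha> < \<gamma>" "P k = {\<alpha>..\<gamma>}" by (elim exE conjE) (rule that)
    show ?thesis unfolding q_def ag(2)
      using normal_interval_pos(1)[OF assms(9)[OF that(2)] sig ag(1)] normal_interval_pos(1)[OF assms(9)[of 1] sig ag(1)]
      by simp
  qed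
  have qpos: "q k > 0" if "k < d" for k
  proof -
    have "\<exists>\<alpha> \<gamma>. \<alpha> < \<gamma> \<and> P k = {\<alpha>..\<gamma>}" using Pint that(1) by simp
    then obtain \<alpha> \<gamma> where ag: "\<alpha> < \<gamma>" "P k = {\<alpha>..\<gamma>}" by (elim exE conjE) (rule that)
    show ?thesis unfolding q_def ag(2)
      using normal_interval_pos[OF assms(9)[of 1] sig ag(1)] by simp
  qed
  have Pm: "P k \<in> sets borel" if "k < d" for k
  proof -
    have "\<exists>\<alpha> \<gamma>. \<alpha> < \<gamma> \<and> P k = {\<alpha>..\<gamma>}" using Pint that(1) by simp
    then obtain \<alpha> \<gamma> where ag: "\<alpha> < \<gamma>" "P k = {\<alpha>..\<gamma>}" by (elim exE conjE) (rule that)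
    show ?thesis unfolding ag(2) by simp
  qed
  have "\<forall>k\<in>{..<d}. AE \<omega> in M. eventually (\<lambda>t. q k * real t / 2 < (\<Sum>s\<in>{1..t}. indicator (P k) (p s \<omega>) :: real)) sequentially"
  proof
    fix k assume "k \<in> {..<d}"
    then have k: "k < d" by simp
    show "AE \<omega> in M. eventually (\<lambda>t. q k * real t / 2 < (\<Sum>s\<in>{1..t}. indicator (P k) (p s \<omega>) :: real)) sequentially"
      by (rule freq_lower[OF assms(8) Pm[OF k] qs[OF k] qpos[OF k]])
  qed
  then have "AE \<omega> in M. \<forall>k\<in>{..<d}. eventually (\<lambda>t. q k * real t / 2 < (\<Sum>s\<in>{1..t}. indicator (P k) (p s \<omega>) :: real)) sequentially"
    by (subst AE_ball_countable) auto
  then show ?thesis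
  proof (rule eventually_mono)
    fix \<omega>
    assume H: "\<forall>k\<in>{..<d}. eventually (\<lambda>t. q k * real t / 2 < (\<Sum>s\<in>{1..t}. indicator (P k) (p s \<omega>) :: real)) sequentially"
    define qm where "qm = Min (q ` {..<d})"
    have qm: "qm > 0" unfolding qm_def using dpos qpos by (subst Min_gr_iff) auto
    have qmle: "qm \<le> q k" if "k < d" for k unfolding qm_def using that by (intro Min_le) auto
    have L0c: "Lam 0 \<omega> \<in> carrier_mat d d" and L0S: "Lam 0 \<omega> * Sigma0 = 1\<^sub>m d" using assms(13) by auto
    note l0 = lam0_facts[OF assms(11) assms(12) L0c L0S]
    obtain C0 where C0: "\<forall>v\<in>carrier_vec d. v \<bullet> (Lam 0 \<omega> *\<^sub>v v) \<le> C0 * (v \<bullet> v)" using l0(3) by blast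
    define C0p where "C0p = max C0 0"
    define Kx where "Kx = (\<Sum>i<d. (real (Suc i) * (\<bar>a\<bar> + \<bar>b\<bar>) ^ i)\<^sup>2)"
    have Kx0: "Kx \<ge> 0" unfolding Kx_def by (intro sum_nonneg) auto
    have LF: "Lam t \<omega> \<in> carrier_mat d d \<and> (Lam t \<omega>)\<^sup>T = Lam t \<omega> \<and>
      (\<forall>v\<in>carrier_vec d. v \<bullet> (Lam t \<omega> *\<^sub>v v) = v \<bullet> (Lam 0 \<omega> *\<^sub>v v) +
       (\<Sum>s\<in>{1..t}. if x s \<omega> \<in> {a<..<b} then (v \<bullet> gradPhi d (x s \<omega>))\<^sup>2 else 0))" for t
      by (rule lam_facts[of "\<lambda>t. Lam t \<omega>" d "\<lambda>t. x t \<omega>" a b]) (use L0c l0(1) assms(14) in auto)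
    define c1 where "c1 = c * qm / 2"
    define c2 where "c2 = max c1 (C0p + Kx)"
    have ev: "eventually (\<lambda>t. 1 \<le> t \<and> (\<forall>k\<in>{..<d}. q k * real t / 2 < (\<Sum>s\<in>{1..t}. indicator (P k) (p s \<omega>) :: real))) sequentially"
      using eventually_ball_finite[OF _ H] eventually_ge_at_top[of 1] by (auto intro: eventually_conj)
    have main: "c1 * real t \<le> lambda_min (Lam t \<omega>) \<and> lambda_min (Lam t \<omega>) \<le> c2 * real t"
      if t: "1 \<le> t" and Nk: "\<forall>k\<in>{..<d}. q k * real t / 2 < (\<Sum>s\<in>{1..t}. indicator (P k) (p s \<omega>) :: real)" for t
    proof
      have Lc: "Lam t \<omega> \<in> carrier_mat d d" and Ls: "(Lam t \<omega>)\<^sup>T = Lam t \<omega>" using LF by auto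
      show "c1 * real t \<le> lambda_min (Lam t \<omega>)"
      proof (rule lambda_min_ge[OF Lc Ls dpos])
        fix v :: "real vec" assume v: "v \<in> carrier_vec d"
        define N where "N k = (\<Sum>s\<in>{1..t}. indicator (P k) (p s \<omega>) :: real)" for k
        have "(\<Sum>s\<in>{1..t}. if x s \<omega> \<in> {a<..<b} then (v \<bullet> gradPhi d (x s \<omega>))\<^sup>2 else 0)
            \<ge> (\<Sum>s\<in>{1..t}. \<Sum>k<d. indicator (P k) (p s \<omega>) * \<beta> k v)"
        proof (rule sum_mono)
          fix s assume "s \<in> {1..t}"
          then have xs: "x s \<omega> = best_response \<theta> {a..b} (p s \<omega>)" using assms(10) by simp
          show "(\<Sum>k<d. indicator (P k) (p s \<omega>) * \<beta> k v) \<le> (if x s \<omega> \<in> {a<..<b} then (v \<bullet> gradPhi d (x s \<omega>))\<^sup>2 else 0)"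
            unfolding xs by (rule \<beta>p[rule_format, OF v])
        qed
        also have "(\<Sum>s\<in>{1..t}. \<Sum>k<d. indicator (P k) (p s \<omega>) * \<beta> k v) = (\<Sum>k<d. \<beta> k v * N k)"
          unfolding N_def by (subst sum.swap) (simp add: sum_distrib_left mult.commute)
        also have "(\<Sum>k<d. \<beta> k v * N k) \<ge> (\<Sum>k<d. \<beta> k v * (qm * real t / 2))"
        proof (rule sum_mono)
          fix k assume k: "k \<in> {..<d}"
          have "qm * real t / 2 \<le> q k * real t / 2" using qmle[of k] k by (simp add: mult_right_mono divide_right_mono)
          also have "\<dots> \<le> N k" using Nk k unfolding N_def by (auto intro: less_imp_le)
          finally have "qm * real t / 2 \<le> N k" .
          then show "\<beta> k v * (qm * real t / 2) \<le> \<beta> k v * N k" by (rule mult_left_mono) (use \<beta>0 in simp)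
        qed
        also have "(\<Sum>k<d. \<beta> k v * (qm * real t / 2)) = (\<Sum>k<d. \<beta> k v) * (qm * real t / 2)"
          by (rule sum_distrib_right[symmetric])
        also have "\<dots> \<ge> (c * (v \<bullet> v)) * (qm * real t / 2)"
          using \<beta>c v qm by (intro mult_right_mono) auto
        finally have S: "(c * (v \<bullet> v)) * (qm * real t / 2) \<le> (\<Sum>s\<in>{1..t}. if x s \<omega> \<in> {a<..<b} then (v \<bullet> gradPhi d (x s \<omega>))\<^sup>2 else 0)" .
        have "c1 * real t * (v \<bullet> v) = (c * (v \<bullet> v)) * (qm * real t / 2)" unfolding c1_def by (simp add: mult_ac)
        moreover have "v \<bullet> (Lam t \<omega> *\<^sub>v v) = v \<bullet> (Lam 0 \<omega> *\<^sub>v v) +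
          (\<Sum>s\<in>{1..t}. if x s \<omega> \<in> {a<..<b} then (v \<bullet> gradPhi d (x s \<omega>))\<^sup>2 else 0)"
          using LF[of t] v by blast
        ultimately show "c1 * real t * (v \<bullet> v) \<le> v \<bullet> (Lam t \<omega> *\<^sub>v v)" using S l0(2)[OF v] by linarith
      qed
      show "lambda_min (Lam t \<omega>) \<le> c2 * real t"
      proof -
        have "lambda_min (Lam t \<omega>) \<le> (C0p + Kx) * real t"
        proof (rule lambda_min_le[OF Lc Ls dpos])
          fix v :: "real vec" assume v: "v \<in> carrier_vec d"
          have vv: "v \<bullet> v \<ge> 0" by (rule sp_self_nonneg[OF v])
          have "(\<Sum>s\<in>{1..t}. if x s \<omega> \<in> {a<..<b} then (v \<bullet> gradPhi d (x s \<omega>))\<^sup>2 else 0) \<le> real (card {1..t}) * (Kx * (v \<bullet> v))"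
            by (rule sum_bounded_above) (use grad_sq_bound[OF v] Kx0 vv in \<open>auto simp: Kx_def\<close>)
          then have S: "(\<Sum>s\<in>{1..t}. if x s \<omega> \<in> {a<..<b} then (v \<bullet> gradPhi d (x s \<omega>))\<^sup>2 else 0) \<le> real t * Kx * (v \<bullet> v)"
            by (simp add: mult_ac)
          have "v \<bullet> (Lam 0 \<omega> *\<^sub>v v) \<le> C0p * (v \<bullet> v)" using C0 v vv unfolding C0p_def
            by (smt (verit) mult_right_mono)
          also have "\<dots> \<le> C0p * real t * (v \<bullet> v)"
          proof -
            have h1: "C0p \<ge> 0" unfolding C0p_def by simp
            have "C0p * 1 \<le> C0p * real t" using t h1 by (intro mult_left_mono) auto
            then show ?thesis using vv by (intro mult_right_mono) auto
          qed
          finally have C: "v \<bullet> (Lam 0 \<omega> *\<^sub>v v) \<le> C0p * real t * (v \<bullet> v)" .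
          have "v \<bullet> (Lam t \<omega> *\<^sub>v v) = v \<bullet> (Lam 0 \<omega> *\<^sub>v v) +
              (\<Sum>s\<in>{1..t}. if x s \<omega> \<in> {a<..<b} then (v \<bullet> gradPhi d (x s \<omega>))\<^sup>2 else 0)"
            using LF[of t] v by blast
          then have "v \<bullet> (Lam t \<omega> *\<^sub>v v) \<le> C0p * real t * (v \<bullet> v) + real t * Kx * (v \<bullet> v)"
            using S C by linarith
          then show "v \<bullet> (Lam t \<omega> *\<^sub>v v) \<le> (C0p + Kx) * real t * (v \<bullet> v)" by (simp add: algebra_simps)
        qed
        also have "\<dots> \<le> c2 * real t" unfolding c2_def by (intro mult_right_mono) auto
        finally show ?thesis .
      qed
    qed
    have c1p: "0 < c1" unfolding c1_def using c qm by simp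
    have c12: "c1 \<le> c2" unfolding c2_def by simp
    have evt: "\<forall>\<^sub>F t in sequentially. c1 * real t \<le> lambda_min (Lam t \<omega>) \<and> lambda_min (Lam t \<omega>) \<le> c2 * real t"
      using ev by (rule eventually_mono) (intro main; simp)
    show "\<exists>c1 c2. 0 < c1 \<and> c1 \<le> c2 \<and>
           (\<forall>\<^sub>F t in sequentially. c1 * real t \<le> lambda_min (Lam t \<omega>) \<and> lambda_min (Lam t \<omega>) \<le> c2 * real t)"
      by (intro exI[of _ c1] exI[of _ c2] conjI c1p c12 evt)
  qed
qed

end
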